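(* Let $n,p\ge 1$, let $X\in\mathbb{R}^{n\times p}$ be an arbitrary design matrix with rows $\mathbf{x}_1^T,\dots,\mathbf{x}_n^T$, let $\mathbf{y}=(y_1,\dots,y_n)\in\{0,1\}^n$ be arbitrary observed binary responses, let $\boldsymbol{\beta}_a\in\mathbb{R}^p$ be arbitrary, and let $\Sigma_a\in\mathbb{R}^{p\times p}$ be an arbitrary positive definite matrix. Let $\nu>2$. Then the Markov operator $K$ on $L^2_0(\pi(\cdot\mid\mathbf{y}))$ associated with the robit data augmentation (DA) Markov chain (described in the context) is trace class, i.e. $\int_{\mathbb{R}^p} k(\boldsymbol{\beta},\boldsymbol{\beta})\,d\boldsymbol{\beta}<\infty$, so that the spectrum of $K$ is countable and its eigenvalues are summable.
   Context: Bayesian robit regression model: $Y_1,\dots,Y_n$ are independent with $P(Y_i=1\mid\boldsymbol{\beta})=F_\nu(\mathbf{x}_i^T\boldsymbol{\beta})$, where $F_\nu$ is the CDF of the Student's $t$-distribution with $\nu$ degrees of freedom, location $0$, scale $1$; the prior is $\boldsymbol{\beta}\sim\mathcal{N}_p(\boldsymbol{\beta}_a,\Sigma_a^{-1})$. Let $\pi(\boldsymbol{\beta}\mid\mathbf{y})$ denote the posterior density. Latent variables: $(Z_i,\lambda_i)$ independent with $\lambda_i\sim\mathrm{Gamma}(\nu/2,\nu/2)$ (shape, rate), $Z_i\mid\lambda_i\sim\mathcal{N}(\mathbf{x}_i^T\boldsymbol{\beta},1/\lambda_i)$, $Y_i=1_{\{Z_i>0\}}$. The robit DA chain on $\mathbb{R}^p$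 moves from $\boldsymbol{\beta}$ to $\boldsymbol{\beta}'$ as follows: (1) independently for $i=1,\dots,n$, draw $z_i$ from the $t_\nu$ distribution with location $\mathbf{x}_i^T\boldsymbol{\beta}$ and scale $1$, truncated to $(0,\infty)$ if $y_i=1$ and to $(-\infty,0)$ if $y_i=0$; then draw $\lambda_i\sim\mathrm{Gamma}\big(\tfrac{\nu+1}{2},\tfrac{\nu+(z_i-\mathbf{x}_i^T\boldsymbol{\beta})^2}{2}\big)$ (shape, rate); (2) with $\Lambda=\mathrm{diag}(\lambda_1,\dots,\lambda_n)$ and $\mathbf{z}=(z_1,\dots,z_n)^T$, draw $\boldsymbol{\beta}'\sim\mathcal{N}_p\big((X^T\Lambda X+\Sigma_a)^{-1}(X^T\Lambda\mathbf{z}+\Sigma_a\boldsymbol{\beta}_a),\,(X^T\Lambda X+\Sigma_a)^{-1}\big)$. Its transition density is $k(\boldsymbol{\beta},\boldsymbol{\beta}')=\int_{\mathbb{R}^n_+}\int_{\mathbb{R}^n}\pi(\boldsymbol{\beta}'\mid\boldsymbol{\lambda},\mathbf{z},\mathbf{y})\,\pi(\boldsymbol{\lambda},\mathbf{z}\mid\boldsymbol{\beta},\mathbf{y})\,d\mathbf{z}\,d\boldsymbol{\lambda}$, where these are the conditional densities from steps (2) and (1). It has stationary density $\pi(\boldsymbol{\beta}\mid\mathbf{y})$ and is reversible; $K$ is the operator $(Kf)(\boldsymbol{\beta})=\int k(\boldsymbol{\beta},\boldsymbol{\beta}')f(\boldsymbol{\beta}')d\boldsymbol{\beta}'$ on the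 space $L^2_0(\pi(\cdot\mid\mathbf{y}))$ of mean-zero square-integrable functions with respect to the posterior; it is positive and self-adjoint. *)

theory Defs
  imports "HOL-Analysis.Analysis"
begin

definition t_pdf :: "real \<Rightarrow> real \<Rightarrow> real" where
  "t_pdf \<nu> x = Gamma ((\<nu> + 1) / 2) / (sqrt (\<nu> * pi) * Gamma (\<nu> / 2))
                  * (1 + x\<^sup>2 / \<nu>) powr (- (\<nu> + 1) / 2)"

definition t_cdf :: "real \<Rightarrow> real \<Rightarrow> real" where
  "t_cdf \<nu> x = (LBINT t:{..x}. t_pdf \<nu> t)"

definition trunc_t_pdf :: "real \<Rightarrow> real \<Rightarrow> real \<Rightarrow> real \<Rightarrow> real" where
  "trunc_t_pdf \<nu> m yi z =
     (if yi = 1 then (if z > 0 then t_pdf \<nu> (z - m) / t_cdf \<nu> m else 0)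
      else (if z < 0 then t_pdf \<nu> (z - m) / (1 - t_cdf \<nu> m) else 0))"

definition gamma_pdf :: "real \<Rightarrow> real \<Rightarrow> real \<Rightarrow> real" where
  "gamma_pdf a b x = (if x > 0 then b powr a * x powr (a - 1) * exp (- b * x) / Gamma a else 0)"

definition mvn_prec_pdf :: "real^'p \<Rightarrow> real^'p^'p \<Rightarrow> real^'p \<Rightarrow> real" where
  "mvn_prec_pdf mu Q b =
     (2 * pi) powr (- real CARD('p) / 2) * sqrt (det Q)
     * exp (- ((b - mu) \<bullet> (Q *v (b - mu))) / 2)"

definition diag_mat :: "real^'n \<Rightarrow> real^'n^'n" where
  "diag_mat l = (\<chi> i j. if i = j then l $ i else 0)"

definition pos_def :: "real^'p^'p \<Rightarrow> bool" where
  "pos_def S \<longleftrightarrow> transpose S = S \<and> (\<forall>x. x \<noteq> 0 \<longrightarrow> x \<bullet> (S *v x) > 0)"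

text \<open>Conditional density of (lambda, z) given beta, y (step (1) of the robit DA chain).\<close>
definition robit_latent_pdf ::
  "real \<Rightarrow> real^'p^'n \<Rightarrow> real^'n \<Rightarrow> real^'p \<Rightarrow> real^'n \<Rightarrow> real^'n \<Rightarrow> real" where
  "robit_latent_pdf \<nu> X y b l z =
     (\<Prod>i\<in>UNIV. trunc_t_pdf \<nu> ((X $ i) \<bullet> b) (y $ i) (z $ i)
        * gamma_pdf ((\<nu> + 1) / 2) ((\<nu> + (z $ i - (X $ i) \<bullet> b)\<^sup>2) / 2) (l $ i))"

text \<open>Conditional density of beta' given (lambda, z, y) (step (2)).\<close>
definition robit_beta_pdf ::
  "real^'p^'n \<Rightarrow> real^'p \<Rightarrow> real^'p^'p \<Rightarrow> real^'n \<Rightarrow> real^'n \<Rightarrow> real^'p \<Rightarrow> real" where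
  "robit_beta_pdf X ba Sa l z b' =
     (let Q = transpose X ** diag_mat l ** X + Sa
      in mvn_prec_pdf (matrix_inv Q *v (transpose X *v (diag_mat l *v z) + Sa *v ba)) Q b')"

definition robit_da_kernel ::
  "real \<Rightarrow> real^'p^'n \<Rightarrow> real^'n \<Rightarrow> real^'p \<Rightarrow> real^'p^'p \<Rightarrow> real^'p \<Rightarrow> real^'p \<Rightarrow> ennreal" where
  "robit_da_kernel \<nu> X y ba Sa b b' =
     (\<integral>\<^sup>+ l. indicator {l. \<forall>i. l $ i > 0} l *
        (\<integral>\<^sup>+ z. ennreal (robit_beta_pdf X ba Sa l z b' * robit_latent_pdf \<nu> X y b l z) \<partial>lborel)
      \<partial>lborel)"

end

theory Submission
  imports Defs "HOL-Probability.Distributions"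
begin


lemma gamma_int:
  fixes a c :: real assumes a: "a > 0" and c: "c > 0"
  shows "(\<integral>\<^sup>+t. ennreal (indicator {0<..} t * t powr (a-1) * exp (-c*t)) \<partial>lborel)
     = ennreal (Gamma a / c powr a)"
proof -
  define f where "f u = ennreal (indicator {0..} u * u powr (a - 1) / exp u)" for u :: real
  have fm: "f \<in> borel_measurable borel" unfolding f_def by measurable
  have "ennreal (Gamma a) = (\<integral>\<^sup>+u. f u \<partial>lborel)"
    using Gamma_conv_nn_integral_real[OF a] by (simp add: f_def)
  also have "\<dots> = ennreal c * (\<integral>\<^sup>+x. f (0 + c * x) \<partial>lborel)"
    using nn_integral_real_affine[OF fm, of c 0] c by simp
  also have "(\<integral>\<^sup>+x. f (0 + c * x) \<partial>lborel) = (\<integral>\<^sup>+x. ennreal (c powr (a-1)) *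
       ennreal (indicator {0<..} x * x powr (a-1) * exp (-c*x)) \<partial>lborel)"
  proof (rule nn_integral_cong)
    fix x :: real
    show "f (0 + c * x) = ennreal (c powr (a-1)) * ennreal (indicator {0<..} x * x powr (a-1) * exp (-c*x))"
    proof (cases "x > 0")
      case True
      have "(c * x) powr (a - 1) / exp (c * x) = c powr (a-1) * (x powr (a-1) * exp (-c*x))"
        using True c by (simp add: powr_mult exp_minus divide_inverse)
      moreover have "c powr (a-1) \<ge> 0" by simp
      ultimately show ?thesis using c True unfolding f_def
        by (simp add: ennreal_mult'' indicator_def)
    next
      case False
      then show ?thesis using c unfolding f_def
        by (auto simp: indicator_def zero_le_mult_iff)
    qed
  qed
  also have "\<dots> = ennreal (c powr (a-1)) * (\<integral>\<^sup>+x. ennreal (indicator {0<..} x * x powr (a-1) * exp (-c*x)) \<partial>lborel)"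
    by (rule nn_integral_cmult) measurable
  finally have eq: "ennreal (Gamma a) = ennreal (c * c powr (a-1)) * (\<integral>\<^sup>+x. ennreal (indicator {0<..} x * x powr (a-1) * exp (-c*x)) \<partial>lborel)"
    using c by (simp add: ennreal_mult' mult.assoc)
  have cc: "c * c powr (a-1) = c powr a" using c by (simp add: powr_diff)
  have pos: "c powr a > 0" using c by simp
  have "ennreal (Gamma a / c powr a) = ennreal (Gamma a) / ennreal (c powr a)"
    using pos Gamma_real_pos[OF a] by (simp add: divide_ennreal)
  also have "\<dots> = (\<integral>\<^sup>+x. ennreal (indicator {0<..} x * x powr (a-1) * exp (-c*x)) \<partial>lborel)"
    unfolding eq cc using pos
    by (subst mult.commute, subst ennreal_mult_divide_eq) auto
  finally show ?thesis by simp
qed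



lemma gauss_int:
  fixes l v :: real assumes l: "l > 0" and v: "v > 0"
  shows "(\<integral>\<^sup>+x. ennreal (exp (- (l * x\<^sup>2 / v))) \<partial>lborel) = ennreal (sqrt (pi * v / l))"
proof -
  define \<sigma> where "\<sigma> = sqrt (v / (2 * l))"
  have sp: "\<sigma> > 0" using l v by (simp add: \<sigma>_def)
  have s2: "\<sigma>\<^sup>2 = v / (2 * l)" using l v by (simp add: \<sigma>_def)
  interpret prob_space "density lborel (normal_density 0 \<sigma>)"
    using prob_space_normal_density[OF sp, of 0] by simp
  have one: "(\<integral>\<^sup>+x. ennreal (normal_density 0 \<sigma> x) \<partial>lborel) = 1"
    using emeasure_space_1 by (simp add: emeasure_density)
  have eq: "exp (- (l * x\<^sup>2 / v)) = sqrt (pi * v / l) * normal_density 0 \<sigma> x" for x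
  proof -
    have a: "2 * pi * \<sigma>\<^sup>2 = pi * v / l" using s2 l by (simp add: field_simps)
    have s2': "2 * \<sigma>\<^sup>2 = v / l" using s2 l by (simp add: field_simps)
    have b: "- (x - 0)\<^sup>2 / (2 * \<sigma>\<^sup>2) = - (l * x\<^sup>2 / v)" unfolding s2' using l v by (simp add: field_simps)
    have c: "sqrt (pi * v / l) > 0" using l v by simp
    show ?thesis unfolding normal_density_def a b using c l v by simp
  qed
  have "(\<integral>\<^sup>+x. ennreal (exp (- (l * x\<^sup>2 / v))) \<partial>lborel)
      = (\<integral>\<^sup>+x. ennreal (sqrt (pi * v / l)) * ennreal (normal_density 0 \<sigma> x) \<partial>lborel)"
    unfolding eq by (intro nn_integral_cong ennreal_mult') (use l v in simp)
  also have "\<dots> = ennreal (sqrt (pi * v / l)) * (\<integral>\<^sup>+x. ennreal (normal_density 0 \<sigma> x) \<partial>lborel)"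
    by (rule nn_integral_cmult) measurable
  finally show ?thesis using one by simp
qed



lemma t_kernel_int:
  fixes v :: real assumes v: "v > 0"
  shows "(\<integral>\<^sup>+x. ennreal ((1 + x\<^sup>2 / v) powr (- (v + 1) / 2)) \<partial>lborel)
      = ennreal (sqrt (pi * v) * Gamma (v / 2) / Gamma ((v + 1) / 2))"
proof -
  define s where "s = (v + 1) / 2"
  have s: "s > 0" using v by (simp add: s_def)
  have Gs: "Gamma s > 0" using Gamma_real_pos[OF s] .
  define F where "F x l = ennreal (indicator {0<..} l * l powr (s - 1) * exp (- (1 + x\<^sup>2 / v) * l))" for x l :: real
  have Fm: "(\<lambda>(x, l). F x l) \<in> borel_measurable (lborel \<Otimes>\<^sub>M lborel)"
    unfolding F_def by measurable
  have M: "ennreal ((1 + x\<^sup>2 / v) powr (- (v + 1) / 2)) = ennreal (1 / Gamma s) * (\<integral>\<^sup>+l. F x l \<partial>lborel)" for x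
  proof -
    have c: "1 + x\<^sup>2 / v > 0" using v by (simp add: add_pos_nonneg)
    have I: "(\<integral>\<^sup>+l. F x l \<partial>lborel) = ennreal (Gamma s / (1 + x\<^sup>2 / v) powr s)"
      unfolding F_def by (rule gamma_int[OF s c])
    have "ennreal (1 / Gamma s) * (\<integral>\<^sup>+l. F x l \<partial>lborel) = ennreal (1 / Gamma s * (Gamma s / (1 + x\<^sup>2 / v) powr s))"
      unfolding I by (rule ennreal_mult'[symmetric]) (use Gs in simp)
    also have "1 / Gamma s * (Gamma s / (1 + x\<^sup>2 / v) powr s) = (1 + x\<^sup>2 / v) powr (- (v + 1) / 2)"
    proof -
      have e: "- (v + 1) / 2 = - s" unfolding s_def by (simp add: field_simps)
      have "(1 + x\<^sup>2 / v) powr (- s) = 1 / (1 + x\<^sup>2 / v) powr s" by (simp add: powr_minus_divide)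
      then show ?thesis unfolding e using Gs by simp
    qed
    finally show ?thesis by simp
  qed
  have inner: "(\<integral>\<^sup>+x. F x l \<partial>lborel) = ennreal (sqrt (pi * v)) *
      ennreal (indicator {0<..} l * l powr (v / 2 - 1) * exp (- 1 * l))" for l
  proof (cases "l > 0")
    case True
    have "(\<integral>\<^sup>+x. F x l \<partial>lborel) = (\<integral>\<^sup>+x. ennreal (l powr (s - 1) * exp (- l)) * ennreal (exp (- (l * x\<^sup>2 / v))) \<partial>lborel)"
    proof (intro nn_integral_cong)
      fix x :: real
      have eqF: "indicator {0<..} l * l powr (s - 1) * exp (- (1 + x\<^sup>2 / v) * l)
          = (l powr (s - 1) * exp (- l)) * exp (- (l * x\<^sup>2 / v))"
        using True by (simp add: exp_add[symmetric] algebra_simps)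
      show "F x l = ennreal (l powr (s - 1) * exp (- l)) * ennreal (exp (- (l * x\<^sup>2 / v)))"
        unfolding F_def eqF by (rule ennreal_mult') simp
    qed
    also have "\<dots> = ennreal (l powr (s - 1) * exp (- l)) * (\<integral>\<^sup>+x. ennreal (exp (- (l * x\<^sup>2 / v))) \<partial>lborel)"
      by (rule nn_integral_cmult) measurable
    also have "\<dots> = ennreal (l powr (s - 1) * exp (- l) * sqrt (pi * v / l))"
      unfolding gauss_int[OF True v] by (rule ennreal_mult'[symmetric]) simp
    also have "l powr (s - 1) * exp (- l) * sqrt (pi * v / l) = sqrt (pi * v) * (l powr (v / 2 - 1) * exp (- 1 * l))"
    proof -
      have h: "l powr (- (1 / 2)) = 1 / sqrt l" using True by (simp add: powr_minus_divide powr_half_sqrt)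
      have "sqrt (pi * v / l) = sqrt (pi * v) * l powr (- (1 / 2))"
        unfolding h using True v by (simp add: real_sqrt_divide)
      moreover have "l powr (s - 1) * l powr (- (1 / 2)) = l powr (v / 2 - 1)"
      proof -
        have "s - 1 + - (1 / 2) = v / 2 - 1" by (simp add: s_def field_simps)
        then show ?thesis by (metis powr_add)
      qed
      ultimately show ?thesis by (simp add: algebra_simps)
    qed
    finally have fin: "(\<integral>\<^sup>+x. F x l \<partial>lborel) = ennreal (sqrt (pi * v) * (l powr (v / 2 - 1) * exp (- 1 * l)))" .
    have ind: "indicator {0<..} l * l powr (v/2-1) * exp(-1*l) = l powr (v / 2 - 1) * exp (- 1 * l)" using True by simp
    show ?thesis unfolding fin ind by (rule ennreal_mult') (use v in simp)
  next
    case False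
    then show ?thesis unfolding F_def by (simp add: indicator_def)
  qed
  have "(\<integral>\<^sup>+x. ennreal ((1 + x\<^sup>2 / v) powr (- (v + 1) / 2)) \<partial>lborel)
        = (\<integral>\<^sup>+x. ennreal (1 / Gamma s) * (\<integral>\<^sup>+l. F x l \<partial>lborel) \<partial>lborel)"
    by (rule nn_integral_cong) (rule M)
  also have "\<dots> = ennreal (1 / Gamma s) * (\<integral>\<^sup>+x. (\<integral>\<^sup>+l. F x l \<partial>lborel) \<partial>lborel)"
    apply (rule nn_integral_cmult)
    using lborel.borel_measurable_nn_integral[OF Fm] by simp
  also have "(\<integral>\<^sup>+x. (\<integral>\<^sup>+l. F x l \<partial>lborel) \<partial>lborel) = (\<integral>\<^sup>+l. (\<integral>\<^sup>+x. F x l \<partial>lborel) \<partial>lborel)"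
    using Fm by (subst lborel_pair.Fubini') (simp_all add: case_prod_unfold)
  also have "\<dots> = (\<integral>\<^sup>+l. ennreal (sqrt (pi * v)) *
      ennreal (indicator {0<..} l * l powr (v / 2 - 1) * exp (- 1 * l)) \<partial>lborel)"
    by (simp add: inner)
  also have "\<dots> = ennreal (sqrt (pi * v)) * ennreal (Gamma (v / 2) / 1 powr (v / 2))"
    by (subst nn_integral_cmult) (measurable, use gamma_int[of "v/2" 1] v in simp)
  finally have "(\<integral>\<^sup>+x. ennreal ((1 + x\<^sup>2 / v) powr (- (v + 1) / 2)) \<partial>lborel) =
     ennreal (1 / Gamma s) * (ennreal (sqrt (pi * v)) * ennreal (Gamma (v / 2)))" by simp
  also have "\<dots> = ennreal (1 / Gamma s * (sqrt (pi * v) * Gamma (v / 2)))"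
    using Gs Gamma_real_pos[of "v/2"] v by (simp add: ennreal_mult'[symmetric])
  also have "1 / Gamma s * (sqrt (pi * v) * Gamma (v / 2)) = sqrt (pi * v) * Gamma (v / 2) / Gamma ((v + 1) / 2)"
    by (simp add: s_def)
  finally show ?thesis .
qed



lemma t_pdf_pos: assumes "v > 0" shows "t_pdf v x > 0"
proof -
  have "1 + x\<^sup>2 / v > 0" using assms by (simp add: add_pos_nonneg)
  moreover have "Gamma ((v + 1) / 2) > 0" "Gamma (v / 2) > 0" using assms by (simp_all add: Gamma_real_pos)
  ultimately show ?thesis using assms unfolding t_pdf_def by simp
qed

lemma t_pdf_even: "t_pdf v (- x) = t_pdf v x"
  unfolding t_pdf_def by simp

lemma t_pdf_meas[measurable]: "t_pdf v \<in> borel_measurable borel"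
  unfolding t_pdf_def by measurable

lemma t_int: assumes v: "v > 0" shows "(\<integral>\<^sup>+x. ennreal (t_pdf v x) \<partial>lborel) = 1"
proof -
  define C where "C = Gamma ((v + 1) / 2) / (sqrt (v * pi) * Gamma (v / 2))"
  have Cp: "C \<ge> 0" using v by (simp add: C_def Gamma_real_pos)
  have "(\<integral>\<^sup>+x. ennreal (t_pdf v x) \<partial>lborel) = (\<integral>\<^sup>+x. ennreal C * ennreal ((1 + x\<^sup>2 / v) powr (- (v + 1) / 2)) \<partial>lborel)"
    unfolding t_pdf_def C_def[symmetric] by (intro nn_integral_cong ennreal_mult' Cp)
  also have "\<dots> = ennreal C * (\<integral>\<^sup>+x. ennreal ((1 + x\<^sup>2 / v) powr (- (v + 1) / 2)) \<partial>lborel)"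
    by (rule nn_integral_cmult) measurable
  also have "\<dots> = ennreal (C * (sqrt (pi * v) * Gamma (v / 2) / Gamma ((v + 1) / 2)))"
    unfolding t_kernel_int[OF v] by (rule ennreal_mult'[symmetric]) (rule Cp)
  also have "C * (sqrt (pi * v) * Gamma (v / 2) / Gamma ((v + 1) / 2)) = 1"
  proof -
    have g1: "Gamma (v/2) > 0" "Gamma ((v+1)/2) > 0" "sqrt (pi * v) > 0" using v by (simp_all add: Gamma_real_pos)
    have sw: "sqrt (v * pi) = sqrt (pi * v)" by (simp add: mult.commute)
    have gen: "\<And>a b c :: real. a > 0 \<Longrightarrow> b > 0 \<Longrightarrow> c > 0 \<Longrightarrow> a / (c * b) * (c * b / a) = 1" by simp
    show ?thesis unfolding C_def sw by (rule gen) (use g1 in auto)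
  qed
  finally show ?thesis by simp
qed

lemma t_integrable: assumes v: "v > 0" shows "integrable lborel (t_pdf v)"
  using t_int[OF v] t_pdf_pos[OF v]
  by (intro integrableI_nonneg) (auto intro: less_imp_le)

lemma t_cdf_nn: assumes v: "v > 0"
  shows "ennreal (t_cdf v m) = (\<integral>\<^sup>+x. ennreal (indicator {..m} x * t_pdf v x) \<partial>lborel)"
proof -
  have i: "integrable lborel (\<lambda>x. indicator {..m} x *\<^sub>R t_pdf v x)"
    by (rule integrable_mult_indicator) (simp_all add: t_integrable[OF v])
  have "t_cdf v m = integral\<^sup>L lborel (\<lambda>x. indicator {..m} x *\<^sub>R t_pdf v x)"
    unfolding t_cdf_def set_lebesgue_integral_def ..
  then show ?thesis
    using nn_integral_eq_integral[OF i] t_pdf_pos[OF v] by (simp add: less_imp_le)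
qed

lemma t_split: assumes v: "v > 0"
  shows "(\<integral>\<^sup>+x. ennreal (indicator {..m} x * t_pdf v x) \<partial>lborel)
       + (\<integral>\<^sup>+x. ennreal (indicator {m<..} x * t_pdf v x) \<partial>lborel) = 1"
proof -
  have "(\<integral>\<^sup>+x. ennreal (indicator {..m} x * t_pdf v x) \<partial>lborel)
       + (\<integral>\<^sup>+x. ennreal (indicator {m<..} x * t_pdf v x) \<partial>lborel)
      = (\<integral>\<^sup>+x. ennreal (indicator {..m} x * t_pdf v x) + ennreal (indicator {m<..} x * t_pdf v x) \<partial>lborel)"
    by (rule nn_integral_add[symmetric]) measurable
  also have "\<dots> = (\<integral>\<^sup>+x. ennreal (t_pdf v x) \<partial>lborel)"
    using t_pdf_pos[OF v]
  proof (intro nn_integral_cong)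
    fix x :: real
    show "ennreal (indicator {..m} x * t_pdf v x) + ennreal (indicator {m<..} x * t_pdf v x) = ennreal (t_pdf v x)"
      by (cases "x \<le> m") (auto simp: indicator_def)
  qed
  finally show ?thesis using t_int[OF v] by simp
qed

lemma t_cdf_bounds: assumes v: "v > 0" shows "0 \<le> t_cdf v m" "t_cdf v m \<le> 1"
proof -
  have i: "integrable lborel (\<lambda>x. indicator {..m} x *\<^sub>R t_pdf v x)"
    by (rule integrable_mult_indicator) (simp_all add: t_integrable[OF v])
  show "0 \<le> t_cdf v m" unfolding t_cdf_def set_lebesgue_integral_def
    using t_pdf_pos[OF v] by (intro integral_nonneg_AE) (auto simp: indicator_def less_imp_le)
  have "ennreal (t_cdf v m) \<le> 1" unfolding t_cdf_nn[OF v, of m] t_split[OF v, of m, symmetric]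
    by (rule add_increasing2) simp_all
  then show "t_cdf v m \<le> 1" using \<open>0 \<le> t_cdf v m\<close> by simp
qed



lemma trunc_nonneg: assumes v: "v > 0" shows "trunc_t_pdf v m yi z \<ge> 0"
  using t_cdf_bounds[OF v, of m] t_pdf_pos[OF v, of "z - m"]
  unfolding trunc_t_pdf_def by (auto intro!: divide_nonneg_nonneg)

lemma trunc_meas[measurable]: "trunc_t_pdf v m yi \<in> borel_measurable borel"
  unfolding trunc_t_pdf_def by measurable

lemma reflect_int:
  fixes g :: "real \<Rightarrow> ennreal" assumes [measurable]: "g \<in> borel_measurable borel"
  shows "(\<integral>\<^sup>+z. g z \<partial>lborel) = (\<integral>\<^sup>+x. g (m - x) \<partial>lborel)"
  using nn_integral_real_affine[of g "-1" m] by simp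

lemma trunc_int: assumes v: "v > 0"
  shows "(\<integral>\<^sup>+z. ennreal (trunc_t_pdf v m yi z) \<partial>lborel) \<le> 1"
proof (cases "yi = 1")
  case True
  define F where "F = t_cdf v m"
  have "(\<integral>\<^sup>+z. ennreal (trunc_t_pdf v m yi z) \<partial>lborel)
      = (\<integral>\<^sup>+z. ennreal (1 / F) * ennreal (indicator {0<..} z * t_pdf v (z - m)) \<partial>lborel)"
  proof (intro nn_integral_cong)
    fix z :: real
    show "ennreal (trunc_t_pdf v m yi z) = ennreal (1 / F) * ennreal (indicator {0<..} z * t_pdf v (z - m))"
      using True t_cdf_bounds[OF v, of m] unfolding trunc_t_pdf_def F_def
      by (subst ennreal_mult'[symmetric]) (auto simp: indicator_def)
  qed
  also have "\<dots> = ennreal (1 / F) * (\<integral>\<^sup>+z. ennreal (indicator {0<..} z * t_pdf v (z - m)) \<partial>lborel)"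
    by (rule nn_integral_cmult) measurable
  also have "(\<integral>\<^sup>+z. ennreal (indicator {0<..} z * t_pdf v (z - m)) \<partial>lborel)
      = (\<integral>\<^sup>+x. ennreal (indicator {0<..} (m - x) * t_pdf v (m - x - m)) \<partial>lborel)"
    by (rule reflect_int) measurable
  also have "\<dots> \<le> (\<integral>\<^sup>+x. ennreal (indicator {..m} x * t_pdf v x) \<partial>lborel)"
  proof (intro nn_integral_mono)
    fix x :: real
    show "ennreal (indicator {0<..} (m - x) * t_pdf v (m - x - m)) \<le> ennreal (indicator {..m} x * t_pdf v x)"
      using t_pdf_pos[OF v, of x] t_pdf_even[of v x] by (auto simp: indicator_def)
  qed
  also have "\<dots> = ennreal F" unfolding F_def by (rule t_cdf_nn[OF v, symmetric])
  finally have "(\<integral>\<^sup>+z. ennreal (trunc_t_pdf v m yi z) \<partial>lborel) \<le> ennreal (1 / F) * ennreal F"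
    by (simp add: mult_left_mono)
  also have "\<dots> = ennreal (1 / F * F)" using t_cdf_bounds[OF v, of m] by (simp add: F_def ennreal_mult'[symmetric])
  also have "\<dots> \<le> 1" by (cases "F = 0") simp_all
  finally show ?thesis .
next
  case False
  define F where "F = t_cdf v m"
  have Fb: "0 \<le> F" "F \<le> 1" using t_cdf_bounds[OF v, of m] by (simp_all add: F_def)
  have "(\<integral>\<^sup>+z. ennreal (trunc_t_pdf v m yi z) \<partial>lborel)
      = (\<integral>\<^sup>+z. ennreal (1 / (1 - F)) * ennreal (indicator {..<0} z * t_pdf v (z - m)) \<partial>lborel)"
  proof (intro nn_integral_cong)
    fix z :: real
    show "ennreal (trunc_t_pdf v m yi z) = ennreal (1 / (1 - F)) * ennreal (indicator {..<0} z * t_pdf v (z - m))"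
      using False Fb unfolding trunc_t_pdf_def F_def
      by (subst ennreal_mult'[symmetric]) (auto simp: indicator_def)
  qed
  also have "\<dots> = ennreal (1 / (1 - F)) * (\<integral>\<^sup>+z. ennreal (indicator {..<0} z * t_pdf v (z - m)) \<partial>lborel)"
    by (rule nn_integral_cmult) measurable
  also have "(\<integral>\<^sup>+z. ennreal (indicator {..<0} z * t_pdf v (z - m)) \<partial>lborel)
      = (\<integral>\<^sup>+x. ennreal (indicator {..<0} (m - x) * t_pdf v (m - x - m)) \<partial>lborel)"
    by (rule reflect_int) measurable
  also have "\<dots> = (\<integral>\<^sup>+x. ennreal (indicator {m<..} x * t_pdf v x) \<partial>lborel)"
  proof (intro nn_integral_cong)
    fix x :: real
    show "ennreal (indicator {..<0} (m - x) * t_pdf v (m - x - m)) = ennreal (indicator {m<..} x * t_pdf v x)"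
      using t_pdf_even[of v x] by (auto simp: indicator_def)
  qed
  also have "\<dots> = 1 - ennreal F"
    using t_split[OF v, of m] unfolding t_cdf_nn[OF v, of m, symmetric] F_def[symmetric]
    by (metis ennreal_add_diff_cancel_left ennreal_neq_top)
  also have "\<dots> = ennreal (1 - F)" using Fb ennreal_minus[of F 1] by simp
  finally have "(\<integral>\<^sup>+z. ennreal (trunc_t_pdf v m yi z) \<partial>lborel) = ennreal (1 / (1 - F)) * ennreal (1 - F)" .
  also have "\<dots> = ennreal (1 / (1 - F) * (1 - F))" using Fb by (simp add: ennreal_mult'[symmetric])
  also have "\<dots> \<le> 1" by (cases "F = 1") simp_all
  finally show ?thesis .
qed



lemma gamma_pdf_nonneg: assumes "a > 0" "b > 0" shows "gamma_pdf a b t \<ge> 0"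
  using assms unfolding gamma_pdf_def by (auto intro!: divide_nonneg_pos Gamma_real_pos)

lemma gamma_mgf:
  fixes a b c :: real assumes a: "a > 0" and b: "b > 0" and c0: "0 \<le> c" and cb: "c \<le> b / 2"
  shows "(\<integral>\<^sup>+t. ennreal (gamma_pdf a b t * exp (c * t)) \<partial>lborel) \<le> ennreal (2 powr a)"
proof -
  define K where "K = b powr a / Gamma a"
  have K0: "K \<ge> 0" using a by (simp add: K_def Gamma_real_pos less_imp_le)
  have bc: "b - c > 0" using b cb by simp
  have "(\<integral>\<^sup>+t. ennreal (gamma_pdf a b t * exp (c * t)) \<partial>lborel)
     = (\<integral>\<^sup>+t. ennreal K * ennreal (indicator {0<..} t * t powr (a-1) * exp (-(b - c)*t)) \<partial>lborel)"
  proof (intro nn_integral_cong)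
    fix t :: real
    have "gamma_pdf a b t * exp (c * t) = K * (indicator {0<..} t * t powr (a-1) * exp (-(b - c)*t))"
    proof (cases "t > 0")
      case True
      have "exp (- b * t) * exp (c * t) = exp (-(b - c)*t)" by (simp add: exp_add[symmetric] algebra_simps)
      then show ?thesis using True unfolding gamma_pdf_def K_def by (simp add: field_simps)
    qed (simp add: gamma_pdf_def)
    then show "ennreal (gamma_pdf a b t * exp (c * t)) = ennreal K * ennreal (indicator {0<..} t * t powr (a-1) * exp (-(b - c)*t))"
      using K0 by (simp add: ennreal_mult')
  qed
  also have "\<dots> = ennreal K * (\<integral>\<^sup>+t. ennreal (indicator {0<..} t * t powr (a-1) * exp (-(b - c)*t)) \<partial>lborel)"
    by (rule nn_integral_cmult) measurable
  also have "\<dots> = ennreal (K * (Gamma a / (b - c) powr a))"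
    unfolding gamma_int[OF a bc] by (rule ennreal_mult'[symmetric]) (rule K0)
  also have "K * (Gamma a / (b - c) powr a) = (b / (b - c)) powr a"
  proof -
    have "Gamma a \<noteq> 0" using Gamma_real_pos[OF a] by simp
    then show ?thesis using a b bc by (simp add: K_def powr_divide less_imp_le)
  qed
  also have "(b / (b - c)) powr a \<le> 2 powr a"
  proof (rule powr_mono2)
    show "b / (b - c) \<le> 2" using bc cb by (simp add: field_simps)
  qed (use a b bc in auto)
  finally show ?thesis by (simp add: ennreal_leI)
qed

definition psi :: "real \<Rightarrow> real \<Rightarrow> real \<Rightarrow> real \<Rightarrow> real \<Rightarrow> real \<Rightarrow> real" where
  "psi v k m yi t z = trunc_t_pdf v m yi z * gamma_pdf ((v + 1) / 2) ((v + (z - m)\<^sup>2) / 2) t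
       * exp (k * t * (1 + \<bar>z - m\<bar>))"

lemma psi_meas[measurable]: "(\<lambda>(t, z). psi v k m yi t z) \<in> borel_measurable (lborel \<Otimes>\<^sub>M lborel)"
  unfolding psi_def gamma_pdf_def by measurable

lemma psi_nonneg: assumes v: "v > 0" shows "psi v k m yi t z \<ge> 0"
proof -
  have "(v + (z - m)\<^sup>2) / 2 > 0" using v by (simp add: add_pos_nonneg)
  then show ?thesis unfolding psi_def using v
    by (intro mult_nonneg_nonneg trunc_nonneg gamma_pdf_nonneg) auto
qed

lemma kappa_ok:
  fixes v e :: real assumes v: "v > 0"
  shows "min v 1 / 8 * (1 + \<bar>e\<bar>) \<le> (v + e\<^sup>2) / 2 / 2"
proof -
  have "0 \<le> (\<bar>e\<bar> - 1)\<^sup>2" by simp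
  also have "(\<bar>e\<bar> - 1)\<^sup>2 = e\<^sup>2 - 2 * \<bar>e\<bar> + 1" by (simp add: power2_diff)
  finally have "\<bar>e\<bar> \<le> 1 + e\<^sup>2" by simp
  then have h: "1 + \<bar>e\<bar> \<le> 2 * (1 + e\<^sup>2)" using zero_le_power2[of e] by (smt (verit))
  have "min v 1 * (1 + e\<^sup>2) \<le> v + e\<^sup>2"
  proof -
    have "min v 1 * (1 + e\<^sup>2) = min v 1 + min v 1 * e\<^sup>2" by (simp add: algebra_simps)
    also have "\<dots> \<le> v + 1 * e\<^sup>2" by (intro add_mono mult_right_mono) auto
    finally show ?thesis by simp
  qed
  moreover have "min v 1 / 8 * (1 + \<bar>e\<bar>) \<le> min v 1 / 8 * (2 * (1 + e\<^sup>2))"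
    using h v by (intro mult_left_mono) auto
  ultimately show ?thesis by (simp add: field_simps)
qed

lemma psi_int:
  assumes v: "v > 0" and k0: "0 \<le> k" and kv: "k \<le> min v 1 / 8"
  shows "(\<integral>\<^sup>+t. (\<integral>\<^sup>+z. ennreal (psi v k m yi t z) \<partial>lborel) \<partial>lborel) \<le> ennreal (2 powr ((v + 1) / 2))"
proof -
  have "(\<integral>\<^sup>+t. (\<integral>\<^sup>+z. ennreal (psi v k m yi t z) \<partial>lborel) \<partial>lborel)
      = (\<integral>\<^sup>+z. (\<integral>\<^sup>+t. ennreal (psi v k m yi t z) \<partial>lborel) \<partial>lborel)"
    by (subst lborel_pair.Fubini') (simp_all add: case_prod_unfold)
  also have "\<dots> \<le> (\<integral>\<^sup>+z. ennreal (trunc_t_pdf v m yi z) * ennreal (2 powr ((v + 1) / 2)) \<partial>lborel)"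
  proof (intro nn_integral_mono)
    fix z :: real
    define b where "b = (v + (z - m)\<^sup>2) / 2"
    define c where "c = k * (1 + \<bar>z - m\<bar>)"
    have b: "b > 0" using v by (simp add: b_def add_pos_nonneg)
    have c0: "0 \<le> c" using k0 by (simp add: c_def)
    have cb: "c \<le> b / 2"
    proof -
      have "c \<le> min v 1 / 8 * (1 + \<bar>z - m\<bar>)" unfolding c_def using kv by (intro mult_right_mono) auto
      also have "\<dots> \<le> b / 2" unfolding b_def by (rule kappa_ok[OF v])
      finally show ?thesis .
    qed
    have a: "(v + 1) / 2 > 0" using v by simp
    have "(\<integral>\<^sup>+t. ennreal (psi v k m yi t z) \<partial>lborel)
        = (\<integral>\<^sup>+t. ennreal (trunc_t_pdf v m yi z) * ennreal (gamma_pdf ((v + 1) / 2) b t * exp (c * t)) \<partial>lborel)"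
    proof (intro nn_integral_cong)
      fix t :: real
      have "psi v k m yi t z = trunc_t_pdf v m yi z * (gamma_pdf ((v + 1) / 2) b t * exp (c * t))"
        unfolding psi_def b_def[symmetric] c_def by (simp add: algebra_simps)
      then show "ennreal (psi v k m yi t z) = ennreal (trunc_t_pdf v m yi z) * ennreal (gamma_pdf ((v + 1) / 2) b t * exp (c * t))"
        using trunc_nonneg[OF v] by (simp add: ennreal_mult')
    qed
    also have "\<dots> = ennreal (trunc_t_pdf v m yi z) * (\<integral>\<^sup>+t. ennreal (gamma_pdf ((v + 1) / 2) b t * exp (c * t)) \<partial>lborel)"
      by (rule nn_integral_cmult) (simp add: gamma_pdf_def)
    also have "\<dots> \<le> ennreal (trunc_t_pdf v m yi z) * ennreal (2 powr ((v + 1) / 2))"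
      by (intro mult_left_mono gamma_mgf[OF a b c0 cb]) simp
    finally show "(\<integral>\<^sup>+t. ennreal (psi v k m yi t z) \<partial>lborel) \<le> ennreal (trunc_t_pdf v m yi z) * ennreal (2 powr ((v + 1) / 2))" .
  qed
  also have "\<dots> = (\<integral>\<^sup>+z. ennreal (trunc_t_pdf v m yi z) \<partial>lborel) * ennreal (2 powr ((v + 1) / 2))"
    by (rule nn_integral_multc) measurable
  also have "\<dots> \<le> 1 * ennreal (2 powr ((v + 1) / 2))"
    by (intro mult_right_mono trunc_int[OF v]) simp
  finally show ?thesis by simp
qed



lemma vec_basis_eq: "(Basis :: (real^'n) set) = (\<lambda>i. axis i 1) ` UNIV"
  by (auto simp: Basis_vec_def)

lemma prod_int_vec:
  fixes f :: "'n::finite \<Rightarrow> real \<Rightarrow> ennreal"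
  assumes [measurable]: "\<And>i. f i \<in> borel_measurable borel"
  shows "(\<integral>\<^sup>+x. (\<Prod>i\<in>UNIV. f i (x $ i)) \<partial>(lborel :: (real^'n) measure)) = (\<Prod>i\<in>UNIV. \<integral>\<^sup>+t. f i t \<partial>lborel)"
proof -
  define F where "F b = f (SOME i. axis i 1 = b)" for b :: "real^'n"
  have Fa: "F (axis i 1) = f i" for i
    unfolding F_def by (rule arg_cong[where f=f]) (auto simp: axis_eq_axis)
  have inj: "inj (\<lambda>i::'n. axis i (1::real))" by (auto simp: inj_def axis_eq_axis)
  have "(\<integral>\<^sup>+x. (\<Prod>b\<in>Basis. F b (x \<bullet> b)) \<partial>(lborel :: (real^'n) measure)) = (\<Prod>b\<in>Basis. (\<integral>\<^sup>+x. F b x \<partial>lborel))"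
    by (rule nn_integral_lborel_prod) (auto simp: vec_basis_eq Fa)
  moreover have "(\<Prod>b\<in>Basis. F b (x \<bullet> b)) = (\<Prod>i\<in>UNIV. f i (x $ i))" for x :: "real^'n"
    unfolding vec_basis_eq by (subst prod.reindex[OF inj]) (simp add: Fa cart_eq_inner_axis)
  moreover have "(\<Prod>b\<in>Basis. (\<integral>\<^sup>+x. F b x \<partial>lborel)) = (\<Prod>i\<in>UNIV. \<integral>\<^sup>+t. f i t \<partial>lborel)"
    unfolding vec_basis_eq by (subst prod.reindex[OF inj]) (simp add: Fa)
  ultimately show ?thesis by simp
qed

lemma exp_abs_int:
  fixes c a :: real assumes c: "c > 0"
  shows "(\<integral>\<^sup>+x. ennreal (exp (- c * \<bar>x - a\<bar>)) \<partial>lborel) < \<infinity>"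
proof -
  define g where "g x = ennreal (indicator {0<..} x * x powr (1 - 1) * exp (- c * x))" for x :: real
  have [measurable]: "g \<in> borel_measurable borel" unfolding g_def by measurable
  have gi: "(\<integral>\<^sup>+x. g x \<partial>lborel) = ennreal (Gamma 1 / c powr 1)" unfolding g_def by (rule gamma_int) (use c in auto)
  have "(\<integral>\<^sup>+x. ennreal (exp (- c * \<bar>x - a\<bar>)) \<partial>lborel) = (\<integral>\<^sup>+x. ennreal (exp (- c * \<bar>a + 1 * x - a\<bar>)) \<partial>lborel)"
    using nn_integral_real_affine[of "\<lambda>x. ennreal (exp (- c * \<bar>x - a\<bar>))" 1 a] by simp
  also have "\<dots> = (\<integral>\<^sup>+x. ennreal (exp (- c * \<bar>x\<bar>)) \<partial>lborel)" by simp
  also have "\<dots> \<le> (\<integral>\<^sup>+x. g x + g (0 + (-1) * x) \<partial>lborel)"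
  proof (rule nn_integral_mono_AE)
    show "AE x in lborel. ennreal (exp (- c * \<bar>x\<bar>)) \<le> g x + g (0 + (-1) * x)"
      using AE_lborel_singleton[of 0]
    proof (rule eventually_mono)
      fix x :: real assume "x \<noteq> 0"
      then show "ennreal (exp (- c * \<bar>x\<bar>)) \<le> g x + g (0 + (-1) * x)"
        unfolding g_def by (cases "x > 0") (auto simp: indicator_def)
    qed
  qed
  also have "\<dots> = (\<integral>\<^sup>+x. g x \<partial>lborel) + (\<integral>\<^sup>+x. g (0 + (-1) * x) \<partial>lborel)"
    by (rule nn_integral_add) measurable
  also have "(\<integral>\<^sup>+x. g (0 + (-1) * x) \<partial>lborel) = (\<integral>\<^sup>+x. g x \<partial>lborel)"
    using nn_integral_real_affine[of g "-1" 0] by simp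
  finally have le: "(\<integral>\<^sup>+x. ennreal (exp (- c * \<bar>x - a\<bar>)) \<partial>lborel) \<le> (\<integral>\<^sup>+x. g x \<partial>lborel) + (\<integral>\<^sup>+x. g x \<partial>lborel)" .
  show ?thesis using le unfolding gi by (rule le_less_trans) (simp add: less_top[symmetric])
qed

lemma exp_norm_int:
  fixes a :: "real^'p" and g :: real assumes g: "g > 0"
  shows "(\<integral>\<^sup>+b. ennreal (exp (- g * norm (b - a))) \<partial>lborel) < \<infinity>"
proof -
  define c where "c = g / real CARD('p)"
  have c: "c > 0" using g by (simp add: c_def)
  have "(\<integral>\<^sup>+b. ennreal (exp (- g * norm (b - a))) \<partial>lborel) \<le> (\<integral>\<^sup>+b. (\<Prod>j\<in>UNIV. ennreal (exp (- c * \<bar>b $ j - a $ j\<bar>))) \<partial>lborel)"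
  proof (intro nn_integral_mono)
    fix b :: "real^'p"
    have "(\<Sum>j\<in>UNIV. \<bar>b $ j - a $ j\<bar>) \<le> (\<Sum>j\<in>(UNIV::'p set). norm (b - a))"
      by (intro sum_mono) (metis component_le_norm_cart vector_minus_component)
    also have "\<dots> = real CARD('p) * norm (b - a)" by simp
    finally have "c * (\<Sum>j\<in>UNIV. \<bar>b $ j - a $ j\<bar>) \<le> g * norm (b - a)"
      unfolding c_def using g by (simp add: field_simps)
    then have "exp (- g * norm (b - a)) \<le> exp (\<Sum>j\<in>UNIV. - c * \<bar>b $ j - a $ j\<bar>)"
      by (simp add: sum_distrib_left[symmetric] sum_negf)
    also have "\<dots> = (\<Prod>j\<in>UNIV. exp (- c * \<bar>b $ j - a $ j\<bar>))" by (rule exp_sum) simp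
    finally show "ennreal (exp (- g * norm (b - a))) \<le> (\<Prod>j\<in>UNIV. ennreal (exp (- c * \<bar>b $ j - a $ j\<bar>)))"
      by (simp add: prod_ennreal ennreal_leI)
  qed
  also have "\<dots> = (\<Prod>j\<in>UNIV. \<integral>\<^sup>+t. ennreal (exp (- c * \<bar>t - a $ j\<bar>)) \<partial>lborel)"
    by (rule prod_int_vec) measurable
  also have "\<dots> < \<infinity>"
  proof -
    have fin: "(\<integral>\<^sup>+t. ennreal (exp (- c * \<bar>t - a $ j\<bar>)) \<partial>lborel) \<noteq> top" for j
      using exp_abs_int[OF c, of "a $ j"] by simp
    have "(\<Prod>j\<in>UNIV. \<integral>\<^sup>+t. ennreal (exp (- c * \<bar>t - a $ j\<bar>)) \<partial>lborel) \<noteq> top"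
      using fin by (simp add: ennreal_prod_eq_top)
    then show ?thesis by (simp add: top.not_eq_extremum)
  qed
  finally show ?thesis .
qed



lemma inner_transpose: fixes X :: "real^'p^'n" shows "u \<bullet> (transpose X *v v) = (X *v u) \<bullet> v"
proof -
  have "u \<bullet> (transpose X *v v) = (\<Sum>j\<in>UNIV. u $ j * (\<Sum>i\<in>UNIV. X $ i $ j * v $ i))"
    unfolding inner_vec_def matrix_vector_mult_def transpose_def by simp
  also have "\<dots> = (\<Sum>j\<in>UNIV. \<Sum>i\<in>UNIV. X $ i $ j * u $ j * v $ i)"
    by (simp add: sum_distrib_left mult.assoc mult.left_commute)
  also have "\<dots> = (\<Sum>i\<in>UNIV. \<Sum>j\<in>UNIV. X $ i $ j * u $ j * v $ i)"
    by (rule sum.swap)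
  also have "\<dots> = (\<Sum>i\<in>UNIV. (\<Sum>j\<in>UNIV. X $ i $ j * u $ j) * v $ i)"
    by (simp add: sum_distrib_right)
  also have "\<dots> = (X *v u) \<bullet> v"
    unfolding inner_vec_def matrix_vector_mult_def by simp
  finally show ?thesis .
qed

lemma sum_delta_mult: "(\<Sum>j\<in>(UNIV::'n::finite set). (if i = j then a else 0) * (b j :: real)) = a * b i"
proof -
  have "(\<Sum>j\<in>(UNIV::'n set). (if i = j then a else 0) * b j) = (\<Sum>j\<in>(UNIV::'n set). if j = i then a * b j else 0)"
    by (intro sum.cong) auto
  also have "\<dots> = a * b i" by (simp add: sum.delta')
  finally show ?thesis .
qed

lemma diag_mult: "diag_mat l *v v = (\<chi> i. l $ i * v $ i)"
  unfolding diag_mat_def matrix_vector_mult_def vec_eq_iff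
  by (simp add: sum_delta_mult)

lemma diag_quad: "v \<bullet> (diag_mat l *v v) = (\<Sum>i\<in>UNIV. l $ i * (v $ i)\<^sup>2)"
  unfolding diag_mult inner_vec_def by (simp add: power2_eq_square mult.commute mult.left_commute)

definition QQ :: "real^'p^'n \<Rightarrow> real^'n \<Rightarrow> real^'p^'p \<Rightarrow> real^'p^'p" where
  "QQ X l Sa = transpose X ** diag_mat l ** X + Sa"

lemma QQ_mult: "QQ X l Sa *v u = transpose X *v (diag_mat l *v (X *v u)) + Sa *v u"
  unfolding QQ_def by (simp add: matrix_vector_mult_add_rdistrib matrix_vector_mul_assoc matrix_mul_assoc)

lemma QQ_quad: "u \<bullet> (QQ X l Sa *v u) = (\<Sum>i\<in>UNIV. l $ i * ((X *v u) $ i)\<^sup>2) + u \<bullet> (Sa *v u)"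
  unfolding QQ_mult inner_add_right inner_transpose diag_quad ..

lemma QQ_quad_ge: assumes "\<forall>i. l $ i \<ge> 0" shows "u \<bullet> (QQ X l Sa *v u) \<ge> u \<bullet> (Sa *v u)"
  unfolding QQ_quad using assms by (simp add: sum_nonneg)

lemma QQ_entry: "QQ X l Sa $ j $ k = (\<Sum>i\<in>UNIV. X $ i $ j * l $ i * X $ i $ k) + Sa $ j $ k"
  unfolding QQ_def diag_mat_def matrix_matrix_mult_def transpose_def
  by (simp add: sum_distrib_right if_distrib cong: if_cong)

lemma matvec_norm_bound:
  fixes A :: "real^'m^'n" assumes B: "\<And>j k. \<bar>A $ j $ k\<bar> \<le> B"
  shows "norm (A *v x) \<le> real CARD('n) * real CARD('m) * B * norm x"
proof -
  have "norm (A *v x) \<le> (\<Sum>j\<in>UNIV. \<bar>(A *v x) $ j\<bar>)" by (rule norm_le_l1_cart)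
  also have "\<dots> \<le> (\<Sum>j\<in>(UNIV::'n set). real CARD('m) * B * norm x)"
  proof (rule sum_mono)
    fix j
    have "\<bar>(A *v x) $ j\<bar> = \<bar>\<Sum>k\<in>UNIV. A $ j $ k * x $ k\<bar>" by (simp add: matrix_vector_mult_def)
    also have "\<dots> \<le> (\<Sum>k\<in>UNIV. \<bar>A $ j $ k * x $ k\<bar>)" by (rule sum_abs)
    also have "\<dots> \<le> (\<Sum>k\<in>(UNIV::'m set). B * norm x)"
    proof (rule sum_mono)
      fix k
      have B0: "0 \<le> B" using B[of j k] by linarith
      have "\<bar>A $ j $ k * x $ k\<bar> = \<bar>A $ j $ k\<bar> * \<bar>x $ k\<bar>" by (simp add: abs_mult)
      also have "\<dots> \<le> B * norm x" by (intro mult_mono B component_le_norm_cart B0) simp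
      finally show "\<bar>A $ j $ k * x $ k\<bar> \<le> B * norm x" .
    qed
    finally show "\<bar>(A *v x) $ j\<bar> \<le> real CARD('m) * B * norm x" by simp
  qed
  finally show ?thesis by simp
qed

lemma det_bound:
  fixes A :: "real^'n^'n" assumes B: "\<And>j k. \<bar>A $ j $ k\<bar> \<le> B"
  shows "\<bar>det A\<bar> \<le> fact CARD('n) * B ^ CARD('n)"
proof -
  have B0: "B \<ge> 0" using B order.trans[OF abs_ge_zero] by blast
  have "\<bar>det A\<bar> \<le> (\<Sum>p | p permutes (UNIV::'n set). \<bar>of_int (sign p) * (\<Prod>i\<in>UNIV. A $ i $ p i)\<bar>)"
    unfolding det_def by (rule sum_abs)
  also have "\<dots> \<le> (\<Sum>p | p permutes (UNIV::'n set). B ^ CARD('n))"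
  proof (rule sum_mono)
    fix p assume "p \<in> {p. p permutes (UNIV::'n set)}"
    have "\<bar>of_int (sign p) * (\<Prod>i\<in>UNIV. A $ i $ p i)\<bar> = (\<Prod>i\<in>UNIV. \<bar>A $ i $ p i\<bar>)"
      by (simp add: abs_mult abs_prod sign_def)
    also have "\<dots> \<le> (\<Prod>i\<in>(UNIV::'n set). B)" by (intro prod_mono) (simp add: B)
    finally show "\<bar>of_int (sign p) * (\<Prod>i\<in>UNIV. A $ i $ p i)\<bar> \<le> B ^ CARD('n)" by simp
  qed
  also have "\<dots> = fact CARD('n) * B ^ CARD('n)"
    by (simp add: card_permutations)
  finally show ?thesis .
qed

lemma XtDe_bound:
  fixes X :: "real^'p^'n" assumes MX: "\<And>i j. \<bar>X $ i $ j\<bar> \<le> MX" and l: "\<forall>i. l $ i \<ge> 0"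
  shows "norm (transpose X *v (diag_mat l *v e)) \<le> real CARD('p) * MX * (\<Sum>i\<in>UNIV. l $ i * \<bar>e $ i\<bar>)"
proof -
  have "norm (transpose X *v (diag_mat l *v e)) \<le> (\<Sum>j\<in>UNIV. \<bar>(transpose X *v (diag_mat l *v e)) $ j\<bar>)"
    by (rule norm_le_l1_cart)
  also have "\<dots> \<le> (\<Sum>j\<in>(UNIV::'p set). MX * (\<Sum>i\<in>UNIV. l $ i * \<bar>e $ i\<bar>))"
  proof (rule sum_mono)
    fix j
    have "\<bar>(transpose X *v (diag_mat l *v e)) $ j\<bar> = \<bar>\<Sum>i\<in>UNIV. X $ i $ j * (l $ i * e $ i)\<bar>"
      unfolding diag_mult by (simp add: matrix_vector_mult_def transpose_def)
    also have "\<dots> \<le> (\<Sum>i\<in>UNIV. \<bar>X $ i $ j * (l $ i * e $ i)\<bar>)" by (rule sum_abs)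
    also have "\<dots> \<le> (\<Sum>i\<in>UNIV. MX * (l $ i * \<bar>e $ i\<bar>))"
    proof (rule sum_mono)
      fix i
      have "\<bar>X $ i $ j * (l $ i * e $ i)\<bar> = \<bar>X $ i $ j\<bar> * (l $ i * \<bar>e $ i\<bar>)"
        using l by (simp add: abs_mult)
      also have "\<dots> \<le> MX * (l $ i * \<bar>e $ i\<bar>)" using l MX by (intro mult_right_mono) auto
      finally show "\<bar>X $ i $ j * (l $ i * e $ i)\<bar> \<le> MX * (l $ i * \<bar>e $ i\<bar>)" .
    qed
    finally show "\<bar>(transpose X *v (diag_mat l *v e)) $ j\<bar> \<le> MX * (\<Sum>i\<in>UNIV. l $ i * \<bar>e $ i\<bar>)"
      by (simp add: sum_distrib_left)
  qed
  finally show ?thesis by simp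
qed



lemma pos_def_quant:
  fixes Sa :: "real^'p^'p" assumes "pos_def Sa"
  shows "\<exists>s>0. \<forall>u. s * (norm u)\<^sup>2 \<le> u \<bullet> (Sa *v u)"
proof -
  define f where "f u = u \<bullet> (Sa *v u)" for u :: "real^'p"
  have cont: "continuous_on (sphere 0 1) f"
    unfolding f_def by (intro continuous_on_inner continuous_on_id matrix_vector_mult_linear_continuous_on)
  obtain b :: "real^'p" where b: "b \<in> Basis" using nonempty_Basis by blast
  have "b \<in> sphere 0 1" using b by simp
  then have ne: "sphere (0::real^'p) 1 \<noteq> {}" by blast
  obtain u0 where u0: "u0 \<in> sphere 0 1" and min: "\<forall>y\<in>sphere 0 1. f u0 \<le> f y"
    using continuous_attains_inf[OF compact_sphere ne cont] by blast
  have "u0 \<noteq> 0" using u0 by auto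
  then have s: "f u0 > 0" using assms unfolding pos_def_def f_def by blast
  have scale: "f (c *\<^sub>R y) = c\<^sup>2 * f y" for c y
    unfolding f_def by (simp add: matrix_vector_mult_scaleR power2_eq_square)
  have "f u0 * (norm u)\<^sup>2 \<le> f u" for u
  proof (cases "u = 0")
    case True then show ?thesis by (simp add: f_def)
  next
    case False
    define y where "y = (1 / norm u) *\<^sub>R u"
    have y: "y \<in> sphere 0 1" using False by (simp add: y_def)
    have u: "u = norm u *\<^sub>R y" using False by (simp add: y_def)
    have "f u = (norm u)\<^sup>2 * f y" by (subst u) (rule scale)
    moreover have "f u0 \<le> f y" using min y by blast
    ultimately show ?thesis by (metis mult.commute mult_right_mono zero_le_power2)
  qed
  then show ?thesis using s unfolding f_def by blast
qed

lemma QQ_bilin: "u \<bullet> (QQ X l Sa *v v) = (\<Sum>i\<in>UNIV. l $ i * ((X *v u) $ i) * ((X *v v) $ i)) + u \<bullet> (Sa *v v)"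
  unfolding QQ_mult inner_add_right inner_transpose diag_mult
  by (simp add: inner_vec_def mult.commute mult.left_commute)

lemma QQ_sym:
  fixes Sa :: "real^'p^'p" assumes "pos_def Sa"
  shows "u \<bullet> (QQ X l Sa *v v) = v \<bullet> (QQ X l Sa *v u)"
proof -
  have "u \<bullet> (Sa *v v) = v \<bullet> (Sa *v u)"
    using inner_transpose[of v Sa u] assms unfolding pos_def_def by (simp add: inner_commute)
  then show ?thesis unfolding QQ_bilin by (simp add: mult.commute mult.left_commute)
qed

lemma CS_form:
  fixes A :: "real^'p^'p"
  assumes sym: "\<And>u v. u \<bullet> (A *v v) = v \<bullet> (A *v u)" and psd: "\<And>u. 0 \<le> u \<bullet> (A *v u)"
  shows "(u \<bullet> (A *v v))\<^sup>2 \<le> (u \<bullet> (A *v u)) * (v \<bullet> (A *v v))"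
proof -
  define a where "a = u \<bullet> (A *v u)"
  define b where "b = u \<bullet> (A *v v)"
  define c where "c = v \<bullet> (A *v v)"
  have exp: "0 \<le> a + 2 * t * b + t\<^sup>2 * c" for t
  proof -
    have "(u + t *\<^sub>R v) \<bullet> (A *v (u + t *\<^sub>R v)) = a + t * (u \<bullet> (A *v v)) + t * (v \<bullet> (A *v u)) + t\<^sup>2 * c"
      unfolding a_def c_def
      by (simp add: matrix_vector_right_distrib matrix_vector_mult_scaleR inner_add_left inner_add_right
          power2_eq_square algebra_simps)
    also have "\<dots> = a + 2 * t * b + t\<^sup>2 * c" using sym[of v u] unfolding b_def by simp
    finally show ?thesis using psd[of "u + t *\<^sub>R v"] by simp
  qed
  have c0: "c \<ge> 0" unfolding c_def by (rule psd)
  show ?thesis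
  proof (cases "c = 0")
    case True
    have "b = 0"
    proof (rule ccontr)
      assume "b \<noteq> 0"
      have "0 \<le> a + 2 * (- (a + 1) / (2 * b)) * b" using exp[of "- (a + 1) / (2 * b)"] True by simp
      then show False using \<open>b \<noteq> 0\<close> by (simp add: field_simps)
    qed
    then show ?thesis using True unfolding b_def[symmetric] c_def[symmetric] by simp
  next
    case False
    then have cp: "c > 0" using c0 by simp
    have "0 \<le> a + 2 * (- b / c) * b + (- b / c)\<^sup>2 * c" by (rule exp)
    also have "\<dots> = a - b\<^sup>2 / c" using cp by (simp add: power2_eq_square field_simps)
    finally have "b\<^sup>2 / c \<le> a" by simp
    then have "b\<^sup>2 \<le> a * c" using cp by (simp add: field_simps)
    then show ?thesis unfolding a_def b_def c_def .
  qed
qed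

lemma norm_Ad_bound:
  fixes A :: "real^'p^'p"
  assumes sym: "\<And>u v. u \<bullet> (A *v v) = v \<bullet> (A *v u)" and psd: "\<And>u. 0 \<le> u \<bullet> (A *v u)"
    and lam: "\<And>u. u \<bullet> (A *v u) \<le> lam * (norm u)\<^sup>2"
  shows "(norm (A *v d))\<^sup>2 \<le> lam * (d \<bullet> (A *v d))"
proof -
  define w where "w = A *v d"
  have b: "d \<bullet> (A *v w) = (norm w)\<^sup>2"
    using sym[of d w] unfolding w_def by (simp add: power2_norm_eq_inner)
  have "((norm w)\<^sup>2)\<^sup>2 \<le> (d \<bullet> (A *v d)) * (w \<bullet> (A *v w))"
    using CS_form[OF sym psd, of d w] unfolding b .
  also have "\<dots> \<le> (d \<bullet> (A *v d)) * (lam * (norm w)\<^sup>2)"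
    by (intro mult_left_mono lam psd)
  finally have h: "((norm w)\<^sup>2)\<^sup>2 \<le> (lam * (d \<bullet> (A *v d))) * (norm w)\<^sup>2" by (simp add: algebra_simps)
  show ?thesis
  proof (cases "w = 0")
    case True
    have "0 \<le> lam * (d \<bullet> (A *v d))"
    proof -
      obtain b :: "real^'p" where b: "b \<in> Basis" using nonempty_Basis by blast
      have "0 \<le> lam * (norm b)\<^sup>2" using lam[of b] psd[of b] by linarith
      then have "lam \<ge> 0" using b by simp
      then show ?thesis using psd by simp
    qed
    then show ?thesis using True unfolding w_def by simp
  next
    case False
    then have pos: "(norm w)\<^sup>2 > 0" by simp
    have h2: "(norm w)\<^sup>2 * (norm w)\<^sup>2 \<le> (lam * (d \<bullet> (A *v d))) * (norm w)\<^sup>2"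
      using h by (simp add: power2_eq_square[of "(norm w)\<^sup>2"])
    show ?thesis using mult_right_le_imp_le[OF h2 pos] unfolding w_def .
  qed
qed

lemma QQ_inv:
  fixes Sa :: "real^'p^'p" assumes pd: "pos_def Sa" and l: "\<forall>i. l $ i \<ge> 0"
  shows "QQ X l Sa *v (matrix_inv (QQ X l Sa) *v y) = y"
proof -
  let ?Q = "QQ X l Sa"
  have z: "?Q *v u = 0 \<Longrightarrow> u = 0" for u
  proof (rule ccontr)
    assume "?Q *v u = 0" "u \<noteq> 0"
    then have "u \<bullet> (Sa *v u) > 0" using pd unfolding pos_def_def by blast
    moreover have "u \<bullet> (?Q *v u) \<ge> u \<bullet> (Sa *v u)" by (rule QQ_quad_ge[OF l])
    ultimately show False using \<open>?Q *v u = 0\<close> by simp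
  qed
  have "inj ((*v) ?Q)"
  proof (rule injI)
    fix u v assume "?Q *v u = ?Q *v v"
    then have "?Q *v (u - v) = 0" by (simp add: matrix_vector_mult_diff_distrib)
    then show "u = v" using z[of "u - v"] by simp
  qed
  then have "\<exists>B. B ** ?Q = mat 1" using matrix_left_invertible_injective by blast
  then have inv: "invertible ?Q" using invertible_left_inverse by blast
  then have "?Q ** matrix_inv ?Q = mat 1"
    unfolding invertible_def matrix_inv_def by (rule someI2_ex) auto
  then show ?thesis by (simp add: matrix_vector_mul_assoc)
qed



lemma pow_le_exp: fixes y :: real assumes "y \<ge> 0" shows "y ^ n \<le> fact n * exp y"
proof -
  have "(\<Sum>k\<in>{n}. y ^ k /\<^sub>R fact k) \<le> (\<Sum>k. y ^ k /\<^sub>R fact k)"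
    by (rule sum_le_suminf[OF summable_exp_generic]) (use assms in auto)
  then have "y ^ n / fact n \<le> exp y" by (simp add: exp_def divide_inverse mult.commute)
  then show ?thesis by (simp add: field_simps)
qed

lemma scalar_bound:
  fixes s Bx Bn k W L E R q :: real
  assumes s: "s > 0" and Bx: "Bx > 0" and Bn: "Bn > 0" and k: "k > 0"
    and W: "W \<ge> 0" and L: "L \<ge> 0" and E: "E \<ge> 0" and R0: "R \<ge> 0"
    and RW: "R \<ge> s * W - Bx * E" and q: "q \<ge> R\<^sup>2 / (Bn * (1 + L))"
  shows "- q / 2 \<le> k + k * (L + E) - min k (min (k * s / (2 * Bx)) (s\<^sup>2 / (8 * Bn))) * W"
proof -
  define g where "g = min k (min (k * s / (2 * Bx)) (s\<^sup>2 / (8 * Bn)))"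
  have g0: "g \<ge> 0" using s Bx Bn k by (simp add: g_def)
  have gk: "g \<le> k" and gs: "g \<le> k * s / (2 * Bx)" and gn: "g \<le> s\<^sup>2 / (8 * Bn)" by (simp_all add: g_def)
  have BnL: "Bn * (1 + L) > 0" using Bn L by simp
  have q0: "q \<ge> 0" using q BnL by (meson divide_nonneg_pos order.trans zero_le_power2)
  have "- q / 2 \<le> k + k * (L + E) - g * W"
  proof (cases "Bx * E \<ge> s * W / 2")
    case True
    have "W \<le> 2 * Bx * E / s" using True s by (simp add: field_simps)
    then have "g * W \<le> k * s / (2 * Bx) * (2 * Bx * E / s)"
      using gs g0 W by (intro mult_mono) auto
    also have "\<dots> = k * E" using s Bx by (simp add: field_simps)
    finally have "g * W \<le> k * E" .
    moreover have "0 \<le> k + k * L" using k L by simp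
    ultimately show ?thesis using q0 by (simp add: algebra_simps)
  next
    case False
    then have RW2: "R \<ge> s * W / 2" using RW by simp
    have sW0: "s * W / 2 \<ge> 0" using s W by simp
    have R2: "R\<^sup>2 \<ge> (s * W / 2)\<^sup>2" using RW2 sW0 by (simp add: power_mono)
    show ?thesis
    proof (cases "1 + L \<le> W")
      case True
      have "(s * W / 2)\<^sup>2 / (Bn * (1 + L)) \<le> R\<^sup>2 / (Bn * (1 + L))"
        using R2 BnL by (simp add: divide_right_mono)
      moreover have "s\<^sup>2 * W / (4 * Bn) \<le> (s * W / 2)\<^sup>2 / (Bn * (1 + L))"
      proof -
        have "(s * W / 2)\<^sup>2 / (Bn * (1 + L)) = s\<^sup>2 * W * W / (4 * (Bn * (1 + L)))"
          by (simp add: power2_eq_square field_simps)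
        moreover have "s\<^sup>2 * W / (4 * Bn) \<le> s\<^sup>2 * W * W / (4 * (Bn * (1 + L)))"
        proof -
          have h: "s\<^sup>2 * W * (1 + L) \<le> s\<^sup>2 * W * W" using True W by (intro mult_left_mono) auto
          have "s\<^sup>2 * W / (4 * Bn) = s\<^sup>2 * W * (1 + L) / ((4 * Bn) * (1 + L))"
            by (rule mult_divide_mult_cancel_right[symmetric]) (use L in simp)
          also have "\<dots> \<le> s\<^sup>2 * W * W / ((4 * Bn) * (1 + L))"
            by (rule divide_right_mono[OF h]) (use BnL in simp)
          also have "\<dots> = s\<^sup>2 * W * W / (4 * (Bn * (1 + L)))" by (simp add: mult.assoc)
          finally show ?thesis .
        qed
        ultimately show ?thesis by simp
      qed
      ultimately have "s\<^sup>2 * W / (4 * Bn) \<le> q" using q by linarith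
      then have "- q / 2 \<le> - (s\<^sup>2 / (8 * Bn)) * W" by (simp add: field_simps)
      also have "\<dots> \<le> - g * W" using gn W by (intro mult_right_mono) auto
      also have "\<dots> \<le> k + k * (L + E) - g * W" using k L E by simp
      finally show ?thesis .
    next
      case False
      have "g * W \<le> k * (1 + L)" using gk g0 False W by (intro mult_mono) auto
      moreover have "0 \<le> E * k" using k E by simp
      ultimately show ?thesis using q0 by (simp add: algebra_simps)
    qed
  qed
  then show ?thesis unfolding g_def .
qed



lemma sqrt_le_abs: "sqrt x \<le> 1 + \<bar>x\<bar>"
proof -
  have "sqrt x \<le> sqrt \<bar>x\<bar>" by (rule real_sqrt_le_mono) simp
  also have "sqrt \<bar>x\<bar> \<le> 1 + \<bar>x\<bar>"
  proof -
    have "0 \<le> (sqrt \<bar>x\<bar> - 1)\<^sup>2" by simp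
    also have "\<dots> = \<bar>x\<bar> - 2 * sqrt \<bar>x\<bar> + 1" by (simp add: power2_diff)
    finally show ?thesis using real_sqrt_ge_zero[of "\<bar>x\<bar>"] by linarith
  qed
  finally show ?thesis .
qed

lemma entry_le_sum: fixes M :: "real^'m^'n" shows "\<bar>M $ i $ j\<bar> \<le> (\<Sum>i\<in>UNIV. \<Sum>j\<in>UNIV. \<bar>M $ i $ j\<bar>)"
proof -
  have "\<bar>M $ i $ j\<bar> \<le> (\<Sum>j\<in>UNIV. \<bar>M $ i $ j\<bar>)" by (rule member_le_sum) auto
  also have "\<dots> \<le> (\<Sum>i\<in>UNIV. \<Sum>j\<in>UNIV. \<bar>M $ i $ j\<bar>)"
    by (rule member_le_sum[where f="\<lambda>i. \<Sum>j\<in>UNIV. \<bar>M $ i $ j\<bar>"]) (auto intro: sum_nonneg)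
  finally show ?thesis .
qed

lemma QQ_entry_bound:
  fixes X :: "real^'p^'n" and Sa :: "real^'p^'p"
  assumes mx: "\<And>i j. \<bar>X $ i $ j\<bar> \<le> mx" and ms: "\<And>j k. \<bar>Sa $ j $ k\<bar> \<le> ms" and l: "\<forall>i. l $ i \<ge> 0"
  shows "\<bar>QQ X l Sa $ j $ k\<bar> \<le> (mx\<^sup>2 + ms + 1) * (1 + (\<Sum>i\<in>UNIV. l $ i))"
proof -
  have mx0: "mx \<ge> 0" using mx order.trans[OF abs_ge_zero] by blast
  have ms0: "ms \<ge> 0" using ms order.trans[OF abs_ge_zero] by blast
  have L0: "(\<Sum>i\<in>UNIV. l $ i) \<ge> 0" using l by (simp add: sum_nonneg)
  have "\<bar>QQ X l Sa $ j $ k\<bar> \<le> \<bar>\<Sum>i\<in>UNIV. X $ i $ j * l $ i * X $ i $ k\<bar> + \<bar>Sa $ j $ k\<bar>"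
    unfolding QQ_entry by (rule abs_triangle_ineq)
  also have "\<bar>\<Sum>i\<in>UNIV. X $ i $ j * l $ i * X $ i $ k\<bar> \<le> (\<Sum>i\<in>UNIV. mx\<^sup>2 * l $ i)"
  proof -
    have "\<bar>\<Sum>i\<in>UNIV. X $ i $ j * l $ i * X $ i $ k\<bar> \<le> (\<Sum>i\<in>UNIV. \<bar>X $ i $ j * l $ i * X $ i $ k\<bar>)" by (rule sum_abs)
    also have "\<dots> \<le> (\<Sum>i\<in>UNIV. mx\<^sup>2 * l $ i)"
    proof (rule sum_mono)
      fix i
      have "\<bar>X $ i $ j * l $ i * X $ i $ k\<bar> = (\<bar>X $ i $ j\<bar> * \<bar>X $ i $ k\<bar>) * l $ i" using l by (simp add: abs_mult)
      also have "\<dots> \<le> (mx * mx) * l $ i" using l mx mx0 by (intro mult_right_mono mult_mono) auto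
      finally show "\<bar>X $ i $ j * l $ i * X $ i $ k\<bar> \<le> mx\<^sup>2 * l $ i" by (simp add: power2_eq_square)
    qed
    finally show ?thesis .
  qed
  finally have "\<bar>QQ X l Sa $ j $ k\<bar> \<le> mx\<^sup>2 * (\<Sum>i\<in>UNIV. l $ i) + ms"
    using ms[of j k] by (simp add: sum_distrib_left)
  also have "\<dots> \<le> (mx\<^sup>2 + ms + 1) * (1 + (\<Sum>i\<in>UNIV. l $ i))"
    using L0 ms0 by (simp add: algebra_simps add_increasing mult_nonneg_nonneg)
  finally show ?thesis .
qed

lemma matvec_component: "(X *v b) $ i = X $ i \<bullet> b"
  by (simp add: matrix_vector_mult_def inner_vec_def mult.commute)



lemma mvn_bound:
  fixes X :: "real^'p^'n" and Sa :: "real^'p^'p" and ba :: "real^'p" and v :: real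
  assumes pd: "pos_def Sa" and v: "v > 0"
  obtains K g where "g > 0" "K \<ge> 0"
    "\<And>b l z. \<forall>i. l $ i > 0 \<Longrightarrow> robit_beta_pdf X ba Sa l z b
       \<le> K * exp (- g * norm (b - ba)) * exp (min v 1 / 8 * (\<Sum>i\<in>UNIV. l $ i * (1 + \<bar>z $ i - X $ i \<bullet> b\<bar>)))"
proof -
  obtain s where s: "s > 0" and sq: "\<And>u. s * (norm u)\<^sup>2 \<le> u \<bullet> (Sa *v u)"
    using pos_def_quant[OF pd] by blast
  define mx where "mx = (\<Sum>i\<in>UNIV. \<Sum>j\<in>UNIV. \<bar>X $ i $ j\<bar>)"
  define ms where "ms = (\<Sum>i\<in>UNIV. \<Sum>j\<in>UNIV. \<bar>Sa $ i $ j\<bar>)"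
  have mx: "\<And>i j. \<bar>X $ i $ j\<bar> \<le> mx" unfolding mx_def by (rule entry_le_sum)
  have ms: "\<And>i j. \<bar>Sa $ i $ j\<bar> \<le> ms" unfolding ms_def by (rule entry_le_sum)
  have mx0: "mx \<ge> 0" using mx order.trans[OF abs_ge_zero] by blast
  have ms0: "ms \<ge> 0" using ms order.trans[OF abs_ge_zero] by blast
  define A where "A = mx\<^sup>2 + ms + 1"
  have A1: "A \<ge> 1" using ms0 by (simp add: A_def)
  define P where "P = real CARD('p)"
  have P1: "P \<ge> 1" unfolding P_def by (simp add: Suc_le_eq)
  define Bn where "Bn = P * P * A"
  have Bn: "Bn > 0" using P1 A1 by (simp add: Bn_def)
  define Bx where "Bx = P * mx + 1"
  have Pmx: "0 \<le> P * mx" by (intro mult_nonneg_nonneg) (use P1 mx0 in auto)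
  have Bx: "Bx > 0" using Pmx by (simp add: Bx_def)
  define k where "k = min v 1 / 16"
  have k: "k > 0" using v by (simp add: k_def)
  define g where "g = min k (min (k * s / (2 * Bx)) (s\<^sup>2 / (8 * Bn)))"
  have g: "g > 0" using k s Bx Bn by (simp add: g_def)
  define C1 where "C1 = (1 + fact CARD('p) * A ^ CARD('p)) * (1 / k) ^ CARD('p) * fact CARD('p)"
  have C1: "C1 \<ge> 0" using A1 k by (simp add: C1_def)
  define c0 where "c0 = (2 * pi) powr (- real CARD('p) / 2)"
  have c0: "c0 \<ge> 0" by (simp add: c0_def)
  define K where "K = c0 * C1 * exp (2 * k)"
  have K: "K \<ge> 0" using c0 C1 by (simp add: K_def)
  show ?thesis
  proof (rule that[OF g K])
    fix b :: "real^'p" and l :: "real^'n" and z :: "real^'n"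
    assume lpos: "\<forall>i. l $ i > 0"
    have l0: "\<forall>i. l $ i \<ge> 0" using lpos less_imp_le by blast
    define Q where "Q = QQ X l Sa"
    define mu where "mu = matrix_inv Q *v (transpose X *v (diag_mat l *v z) + Sa *v ba)"
    define d where "d = b - mu"
    define q where "q = d \<bullet> (Q *v d)"
    define w where "w = b - ba"
    define e where "e = X *v b - z"
    define L where "L = (\<Sum>i\<in>UNIV. l $ i)"
    define E where "E = (\<Sum>i\<in>UNIV. l $ i * \<bar>e $ i\<bar>)"
    have L0: "L \<ge> 0" using l0 by (simp add: L_def sum_nonneg)
    have E0: "E \<ge> 0" using l0 by (simp add: E_def sum_nonneg)
    have pdf: "robit_beta_pdf X ba Sa l z b = c0 * sqrt (det Q) * exp (- q / 2)"
      unfolding robit_beta_pdf_def Let_def mvn_prec_pdf_def QQ_def[symmetric] Q_def[symmetric]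
        mu_def[symmetric] d_def[symmetric] q_def[symmetric] c0_def by simp
    have Qd: "Q *v d = transpose X *v (diag_mat l *v e) + Sa *v w"
    proof -
      have "Q *v mu = transpose X *v (diag_mat l *v z) + Sa *v ba"
        unfolding mu_def Q_def by (rule QQ_inv[OF pd l0])
      then show ?thesis unfolding d_def e_def w_def Q_def
        by (simp add: matrix_vector_mult_diff_distrib QQ_mult algebra_simps)
    qed
    have Qsym: "\<And>u u'. u \<bullet> (Q *v u') = u' \<bullet> (Q *v u)" unfolding Q_def by (rule QQ_sym[OF pd])
    have Qpsd: "\<And>u. 0 \<le> u \<bullet> (Q *v u)"
    proof -
      fix u :: "real^'p"
      have "0 \<le> s * (norm u)\<^sup>2" using s by simp
      also have "\<dots> \<le> u \<bullet> (Sa *v u)" by (rule sq)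
      also have "\<dots> \<le> u \<bullet> (Q *v u)" unfolding Q_def by (rule QQ_quad_ge[OF l0])
      finally show "0 \<le> u \<bullet> (Q *v u)" .
    qed
    have Qent: "\<And>j j'. \<bar>Q $ j $ j'\<bar> \<le> A * (1 + L)"
      unfolding Q_def A_def L_def by (rule QQ_entry_bound[OF mx ms l0])
    have Qnorm: "\<And>u. norm (Q *v u) \<le> Bn * (1 + L) * norm u"
    proof -
      fix u :: "real^'p"
      have "norm (Q *v u) \<le> P * P * (A * (1 + L)) * norm u"
        unfolding P_def by (rule matvec_norm_bound[OF Qent])
      then show "norm (Q *v u) \<le> Bn * (1 + L) * norm u" by (simp add: Bn_def mult.assoc)
    qed
    have Qlam: "\<And>u. u \<bullet> (Q *v u) \<le> (Bn * (1 + L)) * (norm u)\<^sup>2"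
    proof -
      fix u :: "real^'p"
      have "u \<bullet> (Q *v u) \<le> norm u * norm (Q *v u)" by (rule norm_cauchy_schwarz)
      also have "\<dots> \<le> norm u * (Bn * (1 + L) * norm u)" by (intro mult_left_mono Qnorm) simp
      finally show "u \<bullet> (Q *v u) \<le> (Bn * (1 + L)) * (norm u)\<^sup>2" by (simp add: power2_eq_square mult.commute mult.left_commute)
    qed
    define R where "R = norm (Q *v d)"
    have R0: "R \<ge> 0" by (simp add: R_def)
    have RQ: "R\<^sup>2 \<le> (Bn * (1 + L)) * q"
      unfolding R_def q_def by (rule norm_Ad_bound[OF Qsym Qpsd Qlam])
    have BnL: "Bn * (1 + L) > 0" using Bn L0 by simp
    have qR: "q \<ge> R\<^sup>2 / (Bn * (1 + L))" using RQ BnL by (simp add: field_simps mult.commute)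
    have Sw: "s * norm w \<le> norm (Sa *v w)"
    proof (cases "w = 0")
      case True then show ?thesis by simp
    next
      case False
      have "s * (norm w)\<^sup>2 \<le> w \<bullet> (Sa *v w)" by (rule sq)
      also have "\<dots> \<le> norm w * norm (Sa *v w)" by (rule norm_cauchy_schwarz)
      finally have "(s * norm w) * norm w \<le> norm (Sa *v w) * norm w" by (simp add: power2_eq_square mult.commute mult.left_commute)
      then show ?thesis using False by simp
    qed
    have XtDe: "norm (transpose X *v (diag_mat l *v e)) \<le> Bx * E"
    proof -
      have "norm (transpose X *v (diag_mat l *v e)) \<le> P * mx * E"
        unfolding P_def E_def by (rule XtDe_bound[OF mx l0])
      also have "\<dots> \<le> Bx * E" using E0 by (intro mult_right_mono) (simp_all add: Bx_def)
      finally show ?thesis .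
    qed
    have RW: "R \<ge> s * norm w - Bx * E"
    proof -
      have "norm (Sa *v w) \<le> norm (Q *v d) + norm (transpose X *v (diag_mat l *v e))"
        unfolding Qd using norm_triangle_ineq4[of "transpose X *v (diag_mat l *v e) + Sa *v w" "transpose X *v (diag_mat l *v e)"]
        by (simp add: norm_minus_commute)
      then show ?thesis using Sw XtDe unfolding R_def by linarith
    qed
    have ex: "- q / 2 \<le> k + k * (L + E) - g * norm w"
      unfolding g_def by (rule scalar_bound[OF s Bx Bn k _ L0 E0 R0 RW qR]) simp
    have sdet: "sqrt (det Q) \<le> C1 * exp (k * (1 + L))"
    proof -
      have "\<bar>det Q\<bar> \<le> fact CARD('p) * (A * (1 + L)) ^ CARD('p)" by (rule det_bound[OF Qent])
      then have "sqrt (det Q) \<le> 1 + fact CARD('p) * (A * (1 + L)) ^ CARD('p)"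
        using sqrt_le_abs[of "det Q"] by linarith
      also have "\<dots> \<le> (1 + fact CARD('p) * A ^ CARD('p)) * (1 + L) ^ CARD('p)"
      proof -
        have Y1: "1 \<le> (1 + L) ^ CARD('p)" using L0 by (simp add: one_le_power)
        have pm: "(A * (1 + L)) ^ CARD('p) = A ^ CARD('p) * (1 + L) ^ CARD('p)" by (rule power_mult_distrib)
        show ?thesis unfolding pm distrib_right using Y1 by (simp add: mult.assoc)
      qed
      also have "(1 + L) ^ CARD('p) \<le> (1 / k) ^ CARD('p) * (fact CARD('p) * exp (k * (1 + L)))"
      proof -
        have "(k * (1 + L)) ^ CARD('p) \<le> fact CARD('p) * exp (k * (1 + L))"
          by (rule pow_le_exp) (use k L0 in simp)
        moreover have "(1 + L) ^ CARD('p) = (1 / k) ^ CARD('p) * (k * (1 + L)) ^ CARD('p)"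
          using k by (simp add: power_mult_distrib[symmetric])
        ultimately show ?thesis using k by (simp add: mult_left_mono)
      qed
      then have "(1 + fact CARD('p) * A ^ CARD('p)) * (1 + L) ^ CARD('p)
          \<le> (1 + fact CARD('p) * A ^ CARD('p)) * ((1 / k) ^ CARD('p) * (fact CARD('p) * exp (k * (1 + L))))"
        using A1 by (intro mult_left_mono) auto
      also have "\<dots> = C1 * exp (k * (1 + L))" by (simp add: C1_def mult.assoc)
      finally show ?thesis .
    qed
    have LE: "L + E = (\<Sum>i\<in>UNIV. l $ i * (1 + \<bar>z $ i - X $ i \<bullet> b\<bar>))"
      unfolding L_def E_def e_def
      by (simp add: sum.distrib[symmetric] algebra_simps matvec_component abs_minus_commute)
    have "robit_beta_pdf X ba Sa l z b = c0 * sqrt (det Q) * exp (- q / 2)" by (rule pdf)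
    also have "\<dots> \<le> c0 * (C1 * exp (k * (1 + L))) * exp (k + k * (L + E) - g * norm w)"
    proof -
      have h1: "c0 * sqrt (det Q) \<le> c0 * (C1 * exp (k * (1 + L)))" by (rule mult_left_mono[OF sdet c0])
      have h2: "exp (- q / 2) \<le> exp (k + k * (L + E) - g * norm w)" using ex by simp
      show ?thesis by (rule mult_mono[OF h1 h2]) (use c0 C1 in simp_all)
    qed
    also have "\<dots> = K * exp (- g * norm w) * exp (k * L + k * L + k * E)"
      unfolding K_def by (simp add: exp_add[symmetric] algebra_simps)
    also have "\<dots> \<le> K * exp (- g * norm w) * exp (min v 1 / 8 * (L + E))"
    proof -
      have "k * L + k * L + k * E \<le> min v 1 / 8 * (L + E)"
        using k L0 E0 by (simp add: k_def algebra_simps)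
      then show ?thesis using K by (intro mult_left_mono) auto
    qed
    finally show "robit_beta_pdf X ba Sa l z b
       \<le> K * exp (- g * norm (b - ba)) * exp (min v 1 / 8 * (\<Sum>i\<in>UNIV. l $ i * (1 + \<bar>z $ i - X $ i \<bullet> b\<bar>)))"
      unfolding LE w_def .
  qed
qed



lemma psi_meas_z[measurable]: "(\<lambda>z. psi v k m yi t z) \<in> borel_measurable borel"
  unfolding psi_def gamma_pdf_def by measurable

lemma psi_meas_G[measurable]: "(\<lambda>t. \<integral>\<^sup>+z. ennreal (psi v k m yi t z) \<partial>lborel) \<in> borel_measurable borel"
proof -
  have "(\<lambda>(t, z). ennreal (psi v k m yi t z)) \<in> borel_measurable (borel \<Otimes>\<^sub>M lborel)"
    unfolding psi_def gamma_pdf_def by measurable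
  then show ?thesis by (rule lborel.borel_measurable_nn_integral)
qed

lemma prod_mono_ennreal:
  fixes f g :: "'a \<Rightarrow> ennreal"
  shows "(\<And>i. i \<in> A \<Longrightarrow> f i \<le> g i) \<Longrightarrow> prod f A \<le> prod g A"
  by (induction A rule: infinite_finite_induct) (auto intro!: mult_mono)

theorem theorem1:
  fixes X :: "real^'p^'n" and y :: "real^'n" and ba :: "real^'p"
    and Sa :: "real^'p^'p" and \<nu> :: real
  assumes "\<forall>i. y $ i \<in> {0, 1}"
    and "pos_def Sa"
    and "\<nu> > 2"
  shows "(\<integral>\<^sup>+ b. robit_da_kernel \<nu> X y ba Sa b b \<partial>lborel) < \<infinity>"
proof -
  have v: "\<nu> > 0" using assms(3) by simp
  obtain g K where g: "g > 0" and K: "K \<ge> 0" and bnd: "\<And>b l z. \<forall>i. l $ i > 0 \<Longrightarrow> robit_beta_pdf X ba Sa l z b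
       \<le> K * exp (- g * norm (b - ba)) * exp (min \<nu> 1 / 8 * (\<Sum>i\<in>UNIV. l $ i * (1 + \<bar>z $ i - X $ i \<bullet> b\<bar>)))"
    by (rule mvn_bound[OF assms(2) v, of X ba]) blast
  define k where "k = min \<nu> 1 / 8"
  have k0: "0 \<le> k" using v by (simp add: k_def)
  define a where "a = (\<nu> + 1) / 2"
  define M where "M = (2 powr a) ^ CARD('n)"
  have M0: "M \<ge> 0" by (simp add: M_def)
  have kb: "robit_da_kernel \<nu> X y ba Sa b b \<le> ennreal (K * exp (- g * norm (b - ba)) * M)" for b
  proof -
    define c where "c = K * exp (- g * norm (b - ba))"
    have c0: "c \<ge> 0" using K by (simp add: c_def)
    define ps where "ps i t z = psi \<nu> k (X $ i \<bullet> b) (y $ i) t z" for i t z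
    have ps0: "ps i t z \<ge> 0" for i t z unfolding ps_def by (rule psi_nonneg[OF v])
    have pw: "ennreal (robit_beta_pdf X ba Sa l z b * robit_latent_pdf \<nu> X y b l z)
        \<le> ennreal c * (\<Prod>i\<in>UNIV. ennreal (ps i (l $ i) (z $ i)))" if lpos: "\<forall>i. l $ i > 0" for l z
    proof -
      have lat0: "robit_latent_pdf \<nu> X y b l z \<ge> 0"
        unfolding robit_latent_pdf_def
      proof (intro prod_nonneg ballI mult_nonneg_nonneg trunc_nonneg[OF v] gamma_pdf_nonneg)
        fix i show "(\<nu> + 1) / 2 > 0" using v by simp
        show "(\<nu> + (z $ i - X $ i \<bullet> b)\<^sup>2) / 2 > 0" using v by (simp add: add_pos_nonneg)
      qed
      have "robit_beta_pdf X ba Sa l z b * robit_latent_pdf \<nu> X y b l z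
          \<le> (c * exp (k * (\<Sum>i\<in>UNIV. l $ i * (1 + \<bar>z $ i - X $ i \<bullet> b\<bar>)))) * robit_latent_pdf \<nu> X y b l z"
        using bnd[OF lpos, of z] lat0 unfolding c_def k_def by (intro mult_right_mono) auto
      also have "\<dots> = c * (\<Prod>i\<in>UNIV. ps i (l $ i) (z $ i))"
      proof -
        have "exp (k * (\<Sum>i\<in>UNIV. l $ i * (1 + \<bar>z $ i - X $ i \<bullet> b\<bar>)))
            = (\<Prod>i\<in>UNIV. exp (k * l $ i * (1 + \<bar>z $ i - X $ i \<bullet> b\<bar>)))"
          by (simp add: sum_distrib_left exp_sum mult.assoc)
        then show ?thesis
          unfolding robit_latent_pdf_def ps_def psi_def
          by (simp add: prod.distrib[symmetric] mult.assoc mult.commute mult.left_commute)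
      qed
      finally have "robit_beta_pdf X ba Sa l z b * robit_latent_pdf \<nu> X y b l z \<le> c * (\<Prod>i\<in>UNIV. ps i (l $ i) (z $ i))" .
      then have "ennreal (robit_beta_pdf X ba Sa l z b * robit_latent_pdf \<nu> X y b l z) \<le> ennreal (c * (\<Prod>i\<in>UNIV. ps i (l $ i) (z $ i)))"
        by (rule ennreal_leI)
      also have "\<dots> = ennreal c * (\<Prod>i\<in>UNIV. ennreal (ps i (l $ i) (z $ i)))"
        using c0 ps0 by (simp add: ennreal_mult' prod_ennreal)
      finally show ?thesis .
    qed
    have inner: "(\<integral>\<^sup>+z. ennreal (robit_beta_pdf X ba Sa l z b * robit_latent_pdf \<nu> X y b l z) \<partial>lborel)
        \<le> ennreal c * (\<Prod>i\<in>UNIV. \<integral>\<^sup>+t. ennreal (ps i (l $ i) t) \<partial>lborel)" if lpos: "\<forall>i. l $ i > 0" for l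
    proof -
      have "(\<integral>\<^sup>+z. ennreal (robit_beta_pdf X ba Sa l z b * robit_latent_pdf \<nu> X y b l z) \<partial>lborel)
          \<le> (\<integral>\<^sup>+z. ennreal c * (\<Prod>i\<in>UNIV. ennreal (ps i (l $ i) (z $ i))) \<partial>lborel)"
        by (intro nn_integral_mono pw[OF lpos])
      also have "\<dots> = ennreal c * (\<integral>\<^sup>+z. (\<Prod>i\<in>UNIV. ennreal (ps i (l $ i) (z $ i))) \<partial>lborel)"
        by (rule nn_integral_cmult) (simp add: ps_def)
      also have "(\<integral>\<^sup>+z. (\<Prod>i\<in>UNIV. ennreal (ps i (l $ i) (z $ i))) \<partial>lborel) = (\<Prod>i\<in>UNIV. \<integral>\<^sup>+t. ennreal (ps i (l $ i) t) \<partial>lborel)"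
        by (rule prod_int_vec) (simp add: ps_def)
      finally show ?thesis .
    qed
    have "robit_da_kernel \<nu> X y ba Sa b b \<le> (\<integral>\<^sup>+l. ennreal c * (\<Prod>i\<in>UNIV. (\<integral>\<^sup>+t. ennreal (ps i (l $ i) t) \<partial>lborel)) \<partial>lborel)"
      unfolding robit_da_kernel_def
    proof (intro nn_integral_mono)
      fix l :: "real^'n"
      show "indicator {l. \<forall>i. l $ i > 0} l *
          (\<integral>\<^sup>+z. ennreal (robit_beta_pdf X ba Sa l z b * robit_latent_pdf \<nu> X y b l z) \<partial>lborel)
          \<le> ennreal c * (\<Prod>i\<in>UNIV. (\<integral>\<^sup>+t. ennreal (ps i (l $ i) t) \<partial>lborel))"
        using inner[of l] by (cases "\<forall>i. l $ i > 0") auto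
    qed
    also have "\<dots> = ennreal c * (\<integral>\<^sup>+l. (\<Prod>i\<in>UNIV. (\<integral>\<^sup>+t. ennreal (ps i (l $ i) t) \<partial>lborel)) \<partial>lborel)"
      by (rule nn_integral_cmult) (simp add: ps_def)
    also have "(\<integral>\<^sup>+l. (\<Prod>i\<in>UNIV. (\<integral>\<^sup>+t. ennreal (ps i (l $ i) t) \<partial>lborel)) \<partial>lborel)
        = (\<Prod>i\<in>UNIV. \<integral>\<^sup>+s. (\<integral>\<^sup>+t. ennreal (ps i s t) \<partial>lborel) \<partial>lborel)"
      by (rule prod_int_vec[where f="\<lambda>i s. \<integral>\<^sup>+t. ennreal (ps i s t) \<partial>lborel"]) (simp add: ps_def)
    also have "\<dots> \<le> (\<Prod>i\<in>(UNIV::'n set). ennreal (2 powr a))"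
    proof (intro prod_mono_ennreal)
      fix i :: 'n
      have kle: "k \<le> min \<nu> 1 / 8" by (simp add: k_def)
      show "(\<integral>\<^sup>+s. (\<integral>\<^sup>+t. ennreal (ps i s t) \<partial>lborel) \<partial>lborel) \<le> ennreal (2 powr a)"
        unfolding ps_def a_def by (rule psi_int[OF v k0 kle])
    qed
    also have "\<dots> = ennreal M" by (simp add: M_def ennreal_power)
    finally have "robit_da_kernel \<nu> X y ba Sa b b \<le> ennreal c * ennreal M"
      by (simp add: mult_left_mono)
    also have "\<dots> = ennreal (c * M)" using c0 by (simp add: ennreal_mult')
    finally show ?thesis unfolding c_def .
  qed
  have "(\<integral>\<^sup>+ b. robit_da_kernel \<nu> X y ba Sa b b \<partial>lborel) \<le> (\<integral>\<^sup>+ b. ennreal (K * M) * ennreal (exp (- g * norm (b - ba))) \<partial>lborel)"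
  proof (intro nn_integral_mono)
    fix b :: "real^'p"
    have eq: "K * exp (- g * norm (b - ba)) * M = (K * M) * exp (- g * norm (b - ba))" by simp
    have "ennreal ((K * M) * exp (- g * norm (b - ba))) = ennreal (K * M) * ennreal (exp (- g * norm (b - ba)))"
      by (rule ennreal_mult') (use K M0 in simp)
    then show "robit_da_kernel \<nu> X y ba Sa b b \<le> ennreal (K * M) * ennreal (exp (- g * norm (b - ba)))"
      using kb[of b] unfolding eq by simp
  qed
  also have "\<dots> = ennreal (K * M) * (\<integral>\<^sup>+ b. ennreal (exp (- g * norm (b - ba))) \<partial>lborel)"
    by (rule nn_integral_cmult) measurable
  also have "\<dots> < \<infinity>"
    using exp_norm_int[OF g, of ba] by (simp add: ennreal_mult_less_top)
  finally show ?thesis .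
qed

end
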